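(* Let $L'$ and $L''$ be languages over $\Sigma$ that satisfy the partial order condition. Then $L=L'\cap L''$ also satisfies the partial order condition.
   Context: A DFA $(Q,\Sigma,\delta,q_0,F)$ (with $\delta$ extended to strings) satisfies the partial order condition if there do not exist two distinguishable states $q_1,q_2\in Q$ and strings $x,y\in\Sigma^+$ with $\delta(q_1,x)=\delta(q_2,x)=q_2$ and $\delta(q_2,y)=q_1$; here $q_1,q_2$ are distinguishable if there is $z\in\Sigma^*$ such that exactly one of $\delta(q_1,z),\delta(q_2,z)$ lies in $F$. A (regular) language satisfies the partial order condition if its minimal DFA does. *)

theory Defs
  imports Main
begin

text \<open>Complete DFAs over an alphabet \<Sigma>. States are natural numbers (every finite
  DFA is isomorphic to one with states in nat, so this loses no generality).\<close>

record 'a dfa =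
  states :: "nat set"
  init   :: nat
  final  :: "nat set"
  trans  :: "nat \<Rightarrow> 'a \<Rightarrow> nat"

definition dfa :: "'a set \<Rightarrow> 'a dfa \<Rightarrow> bool" where
  "dfa \<Sigma> M \<longleftrightarrow> finite \<Sigma> \<and> finite (states M) \<and> init M \<in> states M \<and>
     final M \<subseteq> states M \<and> (\<forall>q\<in>states M. \<forall>a\<in>\<Sigma>. trans M q a \<in> states M)"

definition delta :: "'a dfa \<Rightarrow> nat \<Rightarrow> 'a list \<Rightarrow> nat" where
  "delta M q w = foldl (trans M) q w"

definition lang :: "'a set \<Rightarrow> 'a dfa \<Rightarrow> 'a list set" where
  "lang \<Sigma> M = {w \<in> lists \<Sigma>. delta M (init M) w \<in> final M}"

definition regular :: "'a set \<Rightarrow> 'a list set \<Rightarrow> bool" where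
  "regular \<Sigma> L \<longleftrightarrow> (\<exists>M. dfa \<Sigma> M \<and> lang \<Sigma> M = L)"

definition minimal_dfa :: "'a set \<Rightarrow> 'a dfa \<Rightarrow> 'a list set \<Rightarrow> bool" where
  "minimal_dfa \<Sigma> M L \<longleftrightarrow> dfa \<Sigma> M \<and> lang \<Sigma> M = L \<and>
     (\<forall>M'. dfa \<Sigma> M' \<and> lang \<Sigma> M' = L \<longrightarrow> card (states M) \<le> card (states M'))"

definition distinguishable :: "'a set \<Rightarrow> 'a dfa \<Rightarrow> nat \<Rightarrow> nat \<Rightarrow> bool" where
  "distinguishable \<Sigma> M q1 q2 \<longleftrightarrow>
     (\<exists>z\<in>lists \<Sigma>. (delta M q1 z \<in> final M) \<noteq> (delta M q2 z \<in> final M))"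

definition dfa_POC :: "'a set \<Rightarrow> 'a dfa \<Rightarrow> bool" where
  "dfa_POC \<Sigma> M \<longleftrightarrow> \<not> (\<exists>q1\<in>states M. \<exists>q2\<in>states M. \<exists>x\<in>lists \<Sigma>. \<exists>y\<in>lists \<Sigma>.
      x \<noteq> [] \<and> y \<noteq> [] \<and> distinguishable \<Sigma> M q1 q2 \<and>
      delta M q1 x = q2 \<and> delta M q2 x = q2 \<and> delta M q2 y = q1)"

text \<open>A (regular) language satisfies the POC if its minimal DFA does
  (the minimal DFA is unique up to isomorphism; we require it of every minimal DFA).\<close>
definition lang_POC :: "'a set \<Rightarrow> 'a list set \<Rightarrow> bool" where
  "lang_POC \<Sigma> L \<longleftrightarrow> regular \<Sigma> L \<and> (\<forall>M. minimal_dfa \<Sigma> M L \<longrightarrow> dfa_POC \<Sigma> M)"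

end

theory Submission
  imports Defs "HOL-Library.FuncSet" "HOL-Library.Nat_Bijection"
begin

definition pw :: "nat \<Rightarrow> 'a list \<Rightarrow> 'a list" where
  "pw k w = concat (replicate k w)"

lemma delta_Nil[simp]: "delta M q [] = q"
  by (simp add: delta_def)

lemma delta_append[simp]: "delta M q (v @ w) = delta M (delta M q v) w"
  by (simp add: delta_def)

lemma delta_Cons: "delta M q (a # w) = delta M (trans M q a) w"
  by (simp add: delta_def)

lemma delta_in:
  assumes "dfa \<Sigma> M" "q \<in> states M" "w \<in> lists \<Sigma>"
  shows "delta M q w \<in> states M"
  using assms(3,2)
proof (induction w arbitrary: q)
  case Nil then show ?case by simp
next
  case (Cons a w)
  then show ?case using assms(1) by (simp add: delta_Cons dfa_def)
qed

lemma pw_lists: "w \<in> lists \<Sigma> \<Longrightarrow> pw k w \<in> lists \<Sigma>"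
  by (induction k) (auto simp: pw_def)

lemma pw_0[simp]: "pw 0 w = []"
  by (simp add: pw_def)

lemma pw_Suc: "pw (Suc k) w = w @ pw k w"
  by (simp add: pw_def)

lemma pw_ne: "k \<ge> 1 \<Longrightarrow> w \<noteq> [] \<Longrightarrow> pw k w \<noteq> []"
  by (cases k) (auto simp: pw_def)

lemma delta_pw_fix: "delta M q w = q \<Longrightarrow> delta M q (pw k w) = q"
  by (induction k) (auto simp: pw_Suc)

lemma funpow_pw:
  "((\<lambda>(p,q). (delta A p w, delta B q w)) ^^ k) (p,q) = (delta A p (pw k w), delta B q (pw k w))"
proof (induction k arbitrary: p q)
  case 0 then show ?case by (simp add: pw_def)
next
  case (Suc k)
  have "pw (Suc k) w = pw k w @ w" by (simp add: pw_def replicate_append_same[symmetric])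
  then show ?case using Suc by simp
qed

lemma fp: "(f^^a) ((f^^b) s) = (f^^(a+b)) s"
  by (simp add: funpow_add)

lemma funpow_idem:
  assumes "finite S" "\<And>s. s \<in> S \<Longrightarrow> f s \<in> S"
  shows "\<exists>k\<ge>1. \<forall>s\<in>S. (f^^k) ((f^^k) s) = (f^^k) s"
proof -
  define g where "g i = restrict (f^^i) S" for i
  have cl: "(f^^i) s \<in> S" if "s \<in> S" for i s
    using that by (induction i) (auto simp: assms(2))
  have "range g \<subseteq> S \<rightarrow>\<^sub>E S" using cl by (auto simp: g_def)
  moreover have "finite (S \<rightarrow>\<^sub>E S)" using assms(1) by (simp add: finite_PiE)
  ultimately have "finite (range g)" by (rule finite_subset)
  hence "\<not> inj g" using finite_imageD[of g UNIV] by auto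
  then obtain i j where ij: "i \<noteq> j" "g i = g j" unfolding inj_def by blast
  then obtain i j where ij: "i < j" "g i = g j"
    by (metis linorder_neqE_nat)
  hence eq: "(f^^i) s = (f^^j) s" if "s \<in> S" for s
    using that by (metis g_def restrict_apply')
  define p where "p = j - i"
  have jp: "j = i + p" using ij p_def by simp
  have per: "(f^^(i + c*p)) s = (f^^i) s" if "s \<in> S" for c s
  proof (induction c)
    case 0 then show ?case by simp
  next
    case (Suc c)
    have "(f^^(i + Suc c * p)) s = (f^^(c*p)) ((f^^j) s)"
      by (simp add: jp fp algebra_simps)
    also have "\<dots> = (f^^(c*p)) ((f^^i) s)" using eq that by simp
    also have "\<dots> = (f^^(i + c*p)) s" by (simp add: fp algebra_simps)
    finally show ?case using Suc by simp
  qed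
  define k where "k = (i+1)*p"
  have p1: "p \<ge> 1" using ij p_def by simp
  have ki: "k \<ge> i" unfolding k_def using p1
    by (metis add_leD1 mult_le_mono1 mult_1_right nat_mult_le_cancel_disj le_add1 mult.commute order_trans)
  have k1: "k \<ge> 1" unfolding k_def using p1 by simp
  have "(f^^k) ((f^^k) s) = (f^^k) s" if "s \<in> S" for s
  proof -
    have "(f^^k) ((f^^k) s) = (f^^(k-i)) ((f^^(i + (i+1)*p)) s)"
      using ki by (simp add: fp k_def algebra_simps)
    also have "\<dots> = (f^^(k-i)) ((f^^i) s)"
      by (simp only: per[OF that])
    also have "\<dots> = (f^^k) s" using ki by (simp add: fp)
    finally show ?thesis .
  qed
  thus ?thesis using k1 by blast
qed

lemma idem_pw:
  assumes "dfa \<Sigma> A" "dfa \<Sigma> B" "w \<in> lists \<Sigma>"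
  shows "\<exists>k\<ge>1. (\<forall>p\<in>states A. delta A (delta A p (pw k w)) (pw k w) = delta A p (pw k w))
                \<and> (\<forall>q\<in>states B. delta B (delta B q (pw k w)) (pw k w) = delta B q (pw k w))"
proof -
  define f where "f = (\<lambda>(p,q). (delta A p w, delta B q w))"
  have "finite (states A \<times> states B)" using assms by (simp add: dfa_def)
  moreover have "f s \<in> states A \<times> states B" if "s \<in> states A \<times> states B" for s
    using that assms delta_in unfolding f_def by fastforce
  ultimately obtain k where k: "k \<ge> 1" "\<forall>s\<in>states A \<times> states B. (f^^k) ((f^^k) s) = (f^^k) s"
    using funpow_idem by blast
  have "\<forall>p\<in>states A. delta A (delta A p (pw k w)) (pw k w) = delta A p (pw k w)"
  proof
    fix p assume p: "p \<in> states A"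
    obtain q where "q \<in> states B" using assms(2) by (auto simp: dfa_def)
    with p k(2) have "(f^^k) ((f^^k) (p,q)) = (f^^k) (p,q)" by blast
    thus "delta A (delta A p (pw k w)) (pw k w) = delta A p (pw k w)"
      unfolding f_def funpow_pw by simp
  qed
  moreover have "\<forall>q\<in>states B. delta B (delta B q (pw k w)) (pw k w) = delta B q (pw k w)"
  proof
    fix q assume q: "q \<in> states B"
    obtain p where "p \<in> states A" using assms(1) by (auto simp: dfa_def)
    with q k(2) have "(f^^k) ((f^^k) (p,q)) = (f^^k) (p,q)" by blast
    thus "delta B (delta B q (pw k w)) (pw k w) = delta B q (pw k w)"
      unfolding f_def funpow_pw by simp
  qed
  ultimately show ?thesis using k(1) by blast
qed

lemma key:
  assumes A: "dfa \<Sigma> A" and poc: "dfa_POC \<Sigma> A" and p: "p \<in> states A"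
    and X: "X \<in> lists \<Sigma>" "X \<noteq> []" and y: "y \<in> lists \<Sigma>" "y \<noteq> []" and m: "m \<ge> 1"
    and iX: "\<forall>p\<in>states A. delta A (delta A p X) X = delta A p X"
    and iW: "\<forall>p\<in>states A. delta A (delta A p (pw m (X@y))) (pw m (X@y)) = delta A p (pw m (X@y))"
    and z: "z \<in> lists \<Sigma>"
  shows "(delta A (delta A p (pw m (X@y))) z \<in> final A) = (delta A (delta A p (pw m (X@y) @ X)) z \<in> final A)"
proof -
  define Wm where "Wm = pw m (X@y)"
  define r1 where "r1 = delta A p Wm"
  define r2 where "r2 = delta A r1 X"
  define y' where "y' = y @ pw (m-1) (X@y)"
  have Wl: "Wm \<in> lists \<Sigma>" unfolding Wm_def by (rule pw_lists) (use X y in auto)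
  have r1s: "r1 \<in> states A" unfolding r1_def using delta_in[OF A p Wl] .
  have r2s: "r2 \<in> states A" unfolding r2_def using delta_in[OF A r1s X(1)] .
  have "delta A r2 X = r2" unfolding r2_def using iX r1s by blast
  moreover have "delta A r2 y' = r1"
  proof -
    have "Wm = X @ y'" unfolding Wm_def y'_def using m
      by (cases m) (auto simp: pw_Suc)
    hence "delta A r2 y' = delta A r1 Wm" unfolding r2_def by simp
    also have "\<dots> = r1" unfolding r1_def Wm_def using iW p by blast
    finally show ?thesis .
  qed
  moreover have "pw (m-1) (X@y) \<in> lists \<Sigma>" by (rule pw_lists) (use X y in auto)
  moreover have "y' \<in> lists \<Sigma>" "y' \<noteq> []" unfolding y'_def using y calculation by auto
  ultimately have "\<not> distinguishable \<Sigma> A r1 r2"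
    using poc r1s r2s X unfolding dfa_POC_def r2_def by blast
  hence "(delta A r1 z \<in> final A) = (delta A r2 z \<in> final A)"
    using z unfolding distinguishable_def by blast
  thus ?thesis unfolding r2_def r1_def Wm_def by simp
qed

lemma reachable:
  assumes "minimal_dfa \<Sigma> M L" "q \<in> states M"
  shows "\<exists>u\<in>lists \<Sigma>. delta M (init M) u = q"
proof (rule ccontr)
  assume nq: "\<not> ?thesis"
  define R where "R = {delta M (init M) u | u. u \<in> lists \<Sigma>}"
  have M: "dfa \<Sigma> M" "lang \<Sigma> M = L" using assms(1) by (auto simp: minimal_dfa_def)
  have Rs: "R \<subseteq> states M" unfolding R_def using delta_in[OF M(1)] M(1)
    by (auto simp: dfa_def)
  have qR: "q \<notin> R" using nq unfolding R_def by blast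
  define M' where "M' = M\<lparr>states := R, final := final M \<inter> R\<rparr>"
  have dM': "delta M' = delta M" unfolding M'_def delta_def by (simp add: fun_eq_iff)
  have "dfa \<Sigma> M'"
    unfolding dfa_def
  proof (intro conjI ballI)
    show "finite \<Sigma>" using M(1) by (simp add: dfa_def)
    show "finite (states M')" unfolding M'_def using Rs M(1) finite_subset by (auto simp: dfa_def)
    show "init M' \<in> states M'" unfolding M'_def R_def
      by (auto intro!: exI[of _ "[]"])
    show "final M' \<subseteq> states M'" unfolding M'_def by auto
    fix r a assume r: "r \<in> states M'" and a: "a \<in> \<Sigma>"
    then obtain u where u: "u \<in> lists \<Sigma>" "r = delta M (init M) u" unfolding M'_def R_def by auto
    have "trans M' r a = delta M (init M) (u @ [a])" unfolding M'_def using u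
      by (simp add: delta_def)
    thus "trans M' r a \<in> states M'" unfolding M'_def R_def using u a
      by (auto intro!: exI[of _ "u @ [a]"])
  qed
  moreover have "lang \<Sigma> M' = L"
    unfolding M(2)[symmetric] lang_def dM' unfolding M'_def R_def by auto
  ultimately have "card (states M) \<le> card (states M')" using assms(1) by (auto simp: minimal_dfa_def)
  moreover have "card (states M') < card (states M)"
    unfolding M'_def using Rs qR assms(2) M(1)
    by (auto simp: dfa_def intro!: psubset_card_mono)
  ultimately show False by simp
qed

lemma ex_minimal:
  assumes "regular \<Sigma> L"
  shows "\<exists>M. minimal_dfa \<Sigma> M L"
proof -
  define P where "P n = (\<exists>M. dfa \<Sigma> M \<and> lang \<Sigma> M = L \<and> card (states M) = n)" for n
  obtain M0 where "dfa \<Sigma> M0 \<and> lang \<Sigma> M0 = L" using assms by (auto simp: regular_def)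
  hence "P (card (states M0))" unfolding P_def by blast
  hence "P (LEAST n. P n)" by (rule LeastI)
  then obtain M where M: "dfa \<Sigma> M" "lang \<Sigma> M = L" "card (states M) = (LEAST n. P n)"
    unfolding P_def by blast
  have "card (states M) \<le> card (states M')" if "dfa \<Sigma> M' \<and> lang \<Sigma> M' = L" for M'
  proof -
    have "P (card (states M'))" using that unfolding P_def by blast
    thus ?thesis using M(3) by (simp add: Least_le)
  qed
  thus ?thesis using M unfolding minimal_dfa_def by blast
qed

lemma regular_inter:
  assumes "regular \<Sigma> L1" "regular \<Sigma> L2"
  shows "regular \<Sigma> (L1 \<inter> L2)"
proof -
  obtain A where A: "dfa \<Sigma> A" "lang \<Sigma> A = L1" using assms by (auto simp: regular_def)
  obtain B where B: "dfa \<Sigma> B" "lang \<Sigma> B = L2" using assms by (auto simp: regular_def)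
  define M :: "'a dfa" where "M = \<lparr>states = prod_encode ` (states A \<times> states B),
     init = prod_encode (init A, init B), final = prod_encode ` (final A \<times> final B),
     trans = (\<lambda>n a. case prod_decode n of (p,q) \<Rightarrow> prod_encode (trans A p a, trans B q a))\<rparr>"
  have dM: "delta M (prod_encode (p,q)) w = prod_encode (delta A p w, delta B q w)" for p q w
    by (induction w arbitrary: p q) (auto simp: delta_Cons M_def)
  have "dfa \<Sigma> M" using A(1) B(1) unfolding dfa_def M_def by auto
  moreover have "lang \<Sigma> M = L1 \<inter> L2"
  proof -
    have "delta M (init M) w \<in> final M \<longleftrightarrow> delta A (init A) w \<in> final A \<and> delta B (init B) w \<in> final B" for w
    proof -
      have "delta M (init M) w = prod_encode (delta A (init A) w, delta B (init B) w)"
        using dM unfolding M_def by simp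
      moreover have "final M = prod_encode ` (final A \<times> final B)" unfolding M_def by simp
      ultimately show ?thesis using inj_prod_encode[of UNIV] by (auto simp: inj_on_def)
    qed
    thus ?thesis using A(2) B(2) unfolding lang_def by auto
  qed
  ultimately show ?thesis unfolding regular_def by blast
qed

theorem lemma4p5:
  fixes \<Sigma> :: "'a set" and L' L'' :: "'a list set"
  assumes "lang_POC \<Sigma> L'" and "lang_POC \<Sigma> L''"
  shows "lang_POC \<Sigma> (L' \<inter> L'')"
proof -
  have r1: "regular \<Sigma> L'" and r2: "regular \<Sigma> L''" using assms by (auto simp: lang_POC_def)
  obtain A where Am: "minimal_dfa \<Sigma> A L'" using ex_minimal[OF r1] by blast
  obtain B where Bm: "minimal_dfa \<Sigma> B L''" using ex_minimal[OF r2] by blast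
  have pA: "dfa_POC \<Sigma> A" and pB: "dfa_POC \<Sigma> B" using assms Am Bm by (auto simp: lang_POC_def)
  have A: "dfa \<Sigma> A" "lang \<Sigma> A = L'" using Am by (auto simp: minimal_dfa_def)
  have B: "dfa \<Sigma> B" "lang \<Sigma> B = L''" using Bm by (auto simp: minimal_dfa_def)
  have "dfa_POC \<Sigma> M" if Mm: "minimal_dfa \<Sigma> M (L' \<inter> L'')" for M
  proof (rule ccontr)
    have M: "dfa \<Sigma> M" "lang \<Sigma> M = L' \<inter> L''" using Mm by (auto simp: minimal_dfa_def)
    assume "\<not> dfa_POC \<Sigma> M"
    then obtain q1 q2 x y where q: "q1 \<in> states M" "q2 \<in> states M" "x \<in> lists \<Sigma>" "y \<in> lists \<Sigma>"
      "x \<noteq> []" "y \<noteq> []" "distinguishable \<Sigma> M q1 q2"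
      "delta M q1 x = q2" "delta M q2 x = q2" "delta M q2 y = q1"
      unfolding dfa_POC_def by blast
    obtain u where u: "u \<in> lists \<Sigma>" "delta M (init M) u = q1" using reachable[OF Mm q(1)] by blast
    obtain k where k: "k \<ge> 1"
      "\<forall>p\<in>states A. delta A (delta A p (pw k x)) (pw k x) = delta A p (pw k x)"
      "\<forall>q\<in>states B. delta B (delta B q (pw k x)) (pw k x) = delta B q (pw k x)"
      using idem_pw[OF A(1) B(1) q(3)] by blast
    define X where "X = pw k x"
    have X: "X \<in> lists \<Sigma>" "X \<noteq> []" unfolding X_def using pw_lists[OF q(3)] pw_ne[OF k(1) q(5)] by auto
    have q1X: "delta M q1 X = q2" unfolding X_def using k(1) q(8,9) delta_pw_fix[of M q2 x]
      by (cases k) (auto simp: pw_Suc)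
    have Wl: "X @ y \<in> lists \<Sigma>" using X q(4) by auto
    obtain m where m: "m \<ge> 1"
      "\<forall>p\<in>states A. delta A (delta A p (pw m (X@y))) (pw m (X@y)) = delta A p (pw m (X@y))"
      "\<forall>q\<in>states B. delta B (delta B q (pw m (X@y))) (pw m (X@y)) = delta B q (pw m (X@y))"
      using idem_pw[OF A(1) B(1) Wl] by blast
    define Wm where "Wm = pw m (X@y)"
    have Wml: "Wm \<in> lists \<Sigma>" unfolding Wm_def using pw_lists[OF Wl] by blast
    have q1W: "delta M q1 Wm = q1" unfolding Wm_def
      by (rule delta_pw_fix) (simp add: q1X q(10))
    have pAs: "delta A (init A) u \<in> states A" using delta_in[OF A(1) _ u(1)] A(1) by (auto simp: dfa_def)
    have pBs: "delta B (init B) u \<in> states B" using delta_in[OF B(1) _ u(1)] B(1) by (auto simp: dfa_def)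
    have "(delta M q1 z \<in> final M) = (delta M q2 z \<in> final M)" if z: "z \<in> lists \<Sigma>" for z
    proof -
      have l1: "u @ Wm @ z \<in> lists \<Sigma>" "u @ Wm @ X @ z \<in> lists \<Sigma>" using u Wml X z by auto
      have eA: "(u @ Wm @ z \<in> L') = (u @ Wm @ X @ z \<in> L')"
        using key[OF A(1) pA pAs X q(4,6) m(1) k(2)[folded X_def] m(2) z] l1
        unfolding A(2)[symmetric] lang_def Wm_def by simp
      have eB: "(u @ Wm @ z \<in> L'') = (u @ Wm @ X @ z \<in> L'')"
        using key[OF B(1) pB pBs X q(4,6) m(1) k(3)[folded X_def] m(3) z] l1
        unfolding B(2)[symmetric] lang_def Wm_def by simp
      have "(delta M q1 z \<in> final M) = (u @ Wm @ z \<in> L' \<inter> L'')"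
        unfolding M(2)[symmetric] lang_def using l1 u(2) q1W by simp
      moreover have "(delta M q2 z \<in> final M) = (u @ Wm @ X @ z \<in> L' \<inter> L'')"
        unfolding M(2)[symmetric] lang_def using l1 u(2) q1W q1X by simp
      ultimately show ?thesis using eA eB by blast
    qed
    thus False using q(7) unfolding distinguishable_def by blast
  qed
  thus ?thesis unfolding lang_POC_def using regular_inter[OF r1 r2] by blast
qed

end
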